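(* Let the rows $X_1,\dots,X_p$ of $\mathbf X\in\mathbb{R}^{p\times L}$ be i.i.d. zero-mean sub-Gaussian random vectors with sub-Gaussian constant $\overline\sigma<\infty$. Let $\theta\in\mathbb{R}^L$ with $\|\theta\|_2\le B$, $\delta>0$ and $s\ge2$. For $p\ge p_0(B,\delta,s,\overline\sigma)$, $$\mathbb P\Big\{\|\mathrm{II}_\theta-\mathbb E[\mathrm{II}_\theta]\|_2\lesssim\overline\sigma\sqrt{L+\log p}\;p^{\frac12+\delta}\Big\}\ge1-4p^{1-s},$$ where $\lesssim$ hides an absolute constant.
   Context: $\mathrm{II}_\theta=\sum_{j=1}^p e^{X_j^\top\theta}X_j\in\mathbb{R}^L$. A random vector $Z\in\mathbb{R}^L$ is zero-mean sub-Gaussian with constant $\gamma$ if $\mathbb E Z=0$ and $\mathbb E[\exp(v^\top Z)]\le\exp(\|v\|_2^2\gamma^2/2)$ for all $v\in\mathbb{R}^L$. *)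

theory Defs
  imports "HOL-Probability.Probability"
begin

text \<open>Vectors in R^L are represented as functions nat => real; only the
  coordinates i < L matter.\<close>

definition inner_L :: "nat \<Rightarrow> (nat \<Rightarrow> real) \<Rightarrow> (nat \<Rightarrow> real) \<Rightarrow> real" where
  "inner_L L u v = (\<Sum>i<L. u i * v i)"

definition norm_L :: "nat \<Rightarrow> (nat \<Rightarrow> real) \<Rightarrow> real" where
  "norm_L L u = sqrt (\<Sum>i<L. (u i)\<^sup>2)"

definition subgaussian_vec :: "nat \<Rightarrow> (nat \<Rightarrow> real) measure \<Rightarrow> real \<Rightarrow> bool" where
  "subgaussian_vec L \<mu> \<gamma> \<longleftrightarrow>
     (\<forall>i<L. integrable \<mu> (\<lambda>x. x i) \<and> (\<integral>x. x i \<partial>\<mu>) = 0) \<and>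
     (\<forall>v. integrable \<mu> (\<lambda>x. exp (inner_L L v x)) \<and>
          (\<integral>x. exp (inner_L L v x) \<partial>\<mu>) \<le> exp ((norm_L L v)\<^sup>2 * \<gamma>\<^sup>2 / 2))"

text \<open>II_theta = sum_{j<p} exp(X_j^T theta) X_j, where X j is the j-th row.\<close>
definition II :: "nat \<Rightarrow> nat \<Rightarrow> (nat \<Rightarrow> real) \<Rightarrow> (nat \<Rightarrow> nat \<Rightarrow> real) \<Rightarrow> (nat \<Rightarrow> real)" where
  "II L p \<theta> X = (\<lambda>i. \<Sum>j<p. exp (inner_L L (X j) \<theta>) * X j i)"

definition rows_space :: "nat \<Rightarrow> (nat \<Rightarrow> real) measure \<Rightarrow> (nat \<Rightarrow> nat \<Rightarrow> real) measure" where
  "rows_space p \<mu> = PiM {..<p} (\<lambda>_. \<mu>)"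

definition EII :: "nat \<Rightarrow> nat \<Rightarrow> (nat \<Rightarrow> real) \<Rightarrow> (nat \<Rightarrow> real) measure \<Rightarrow> (nat \<Rightarrow> real)" where
  "EII L p \<theta> \<mu> = (\<lambda>i. \<integral>X. II L p \<theta> X i \<partial>(rows_space p \<mu>))"

end

theory Submission
  imports Defs
begin


lemma pow_le_fact_exp:
  fixes x :: real assumes "0 \<le> x"
  shows "x ^ n \<le> fact n * exp x"
proof -
  have s: "(\<lambda>m. x^m /\<^sub>R fact m) sums exp x" by (rule exp_converges)
  have "(\<Sum>m\<in>{n}. x^m /\<^sub>R fact m) \<le> suminf (\<lambda>m. x^m /\<^sub>R fact m)"
    by (rule sum_le_suminf) (use s assms in \<open>auto simp: sums_iff\<close>)
  then have "x^n / fact n \<le> exp x" using s by (simp add: sums_iff divide_inverse mult.commute)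
  then show ?thesis by (simp add: divide_le_eq mult.commute)
qed

lemma abs_pow_le_exp:
  fixes x :: real
  shows "\<bar>x\<bar> ^ n \<le> fact n * (exp x + exp (-x))"
proof -
  have "\<bar>x\<bar> ^ n \<le> fact n * exp \<bar>x\<bar>" by (rule pow_le_fact_exp) simp
  also have "exp \<bar>x\<bar> \<le> exp x + exp (-x)" by (cases "x \<ge> 0") auto
  hence "fact n * exp \<bar>x\<bar> \<le> fact n * (exp x + exp (-x))" by (intro mult_left_mono) auto
  finally show ?thesis .
qed

lemma power_sum_jensen:
  fixes a :: "'i \<Rightarrow> real"
  assumes "finite I" "\<And>i. i \<in> I \<Longrightarrow> 0 \<le> a i" "1 \<le> k"
  shows "(\<Sum>i\<in>I. a i) ^ k \<le> real (card I) ^ (k - 1) * (\<Sum>i\<in>I. a i ^ k)"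
proof (cases "I = {}")
  case True then show ?thesis using assms by (simp add: power_0_left)
next
  case False
  have cI: "card I > 0" using False assms by auto
  have cv: "convex_on {0::real..} (\<lambda>x. x ^ k)"
  proof (cases "even k")
    case True then show ?thesis using convex_power_even convex_on_subset by blast
  next
    case False then show ?thesis using convex_power_odd by blast
  qed
  have "(\<Sum>i\<in>I. (1 / real (card I)) *\<^sub>R a i) ^ k \<le> (\<Sum>i\<in>I. (1 / real (card I)) * a i ^ k)"
    using convex_on_sum[OF assms(1) False cv, of "\<lambda>_. 1 / real (card I)" a] cI assms(2)
    by simp
  hence "((\<Sum>i\<in>I. a i) / real (card I)) ^ k \<le> (\<Sum>i\<in>I. a i ^ k) / real (card I)"
    by (simp add: sum_divide_distrib[symmetric] sum_distrib_left[symmetric] sum_distrib_right[symmetric] divide_inverse mult.commute)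
  hence "(\<Sum>i\<in>I. a i) ^ k / real (card I) ^ k \<le> (\<Sum>i\<in>I. a i ^ k) / real (card I)"
    by (simp add: power_divide)
  hence "(\<Sum>i\<in>I. a i) ^ k \<le> (\<Sum>i\<in>I. a i ^ k) / real (card I) * real (card I) ^ k"
    using cI by (simp add: divide_le_eq)
  also have "(\<Sum>i\<in>I. a i ^ k) / real (card I) * real (card I) ^ k = real (card I) ^ (k - 1) * (\<Sum>i\<in>I. a i ^ k)"
    using cI assms(3) by (cases k) (auto simp: field_simps)
  finally show ?thesis .
qed

lemma sum_pow_le2:
  fixes a b :: real assumes "0 \<le> a" "0 \<le> b"
  shows "(a + b) ^ n \<le> 2 ^ n * (a ^ n + b ^ n)"
proof -
  have "(a + b) ^ n \<le> (2 * max a b) ^ n" using assms by (intro power_mono) auto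
  also have "\<dots> = 2 ^ n * max a b ^ n" by (simp add: power_mult_distrib)
  also have "max a b ^ n \<le> a ^ n + b ^ n" using assms by (cases "a \<le> b") (auto simp: max_def)
  finally show ?thesis by simp
qed



lemma card_small_image:
  fixes n k p :: nat
  assumes p: "0 < p"
  shows "card {f \<in> PiE {..<n} (\<lambda>_. {..<p}). card (f ` {..<n}) \<le> k} \<le> k ^ n * p ^ k"
proof -
  let ?A = "PiE {..<n} (\<lambda>_. {..<k})" and ?B = "PiE {..<k} (\<lambda>_. {..<p})"
  let ?F = "\<lambda>(g, h). restrict (\<lambda>l. h (g l)) {..<n}"
  have sub: "{f \<in> PiE {..<n} (\<lambda>_. {..<p}). card (f ` {..<n}) \<le> k} \<subseteq> ?F ` (?A \<times> ?B)"
  proof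
    fix f assume "f \<in> {f \<in> PiE {..<n} (\<lambda>_. {..<p}). card (f ` {..<n}) \<le> k}"
    hence f: "f \<in> PiE {..<n} (\<lambda>_. {..<p})" and ck: "card (f ` {..<n}) \<le> k" by auto
    let ?S = "f ` {..<n}"
    obtain e where e: "bij_betw e ?S {0..<card ?S}" using ex_bij_betw_finite_nat[of ?S] by auto
    define g where "g = restrict (\<lambda>l. e (f l)) {..<n}"
    define h where "h = restrict (\<lambda>m. if m < card ?S then the_inv_into ?S e m else 0) {..<k}"
    have g1: "e (f l) < k" if "l < n" for l
    proof -
      have "e (f l) \<in> e ` ?S" using that by auto
      then show ?thesis using e ck unfolding bij_betw_def by auto
    qed
    have g: "g \<in> ?A" using g1 unfolding g_def by auto
    have hin: "the_inv_into ?S e m \<in> ?S" if "m < card ?S" for m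
      using e that by (auto intro!: the_inv_into_into simp: bij_betw_def)
    have hin2: "the_inv_into ?S e m < p" if mS: "m < card ?S" for m
    proof -
      obtain l where "l < n" "the_inv_into ?S e m = f l" using hin[OF mS] by auto
      then show ?thesis using f by (auto simp: PiE_iff)
    qed
    have h: "h \<in> ?B" unfolding h_def
      by (rule restrict_PiE_iff[THEN iffD2]) (simp add: hin2 p)
    have "f = ?F (g, h)"
    proof
      fix l show "f l = ?F (g, h) l"
      proof (cases "l < n")
        case True
        have el: "e (f l) < card ?S" using e True unfolding bij_betw_def by auto
        have "the_inv_into ?S e (e (f l)) = f l"
          using e True by (intro the_inv_into_f_f) (auto simp: bij_betw_def)
        then show ?thesis using True el ck unfolding g_def h_def by auto
      next
        case False then show ?thesis using f by (auto simp: PiE_def extensional_def)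
      qed
    qed
    then show "f \<in> ?F ` (?A \<times> ?B)" using g h by (intro image_eqI[of _ _ "(g, h)"]) auto
  qed
  have "card {f \<in> PiE {..<n} (\<lambda>_. {..<p}). card (f ` {..<n}) \<le> k} \<le> card (?F ` (?A \<times> ?B))"
    by (intro card_mono sub) (auto intro!: finite_imageI finite_PiE)
  also have "\<dots> \<le> card (?A \<times> ?B)" by (rule card_image_le) (auto intro!: finite_PiE)
  also have "\<dots> = k ^ n * p ^ k" by (simp add: card_cartesian_product card_PiE)
  finally show ?thesis .
qed



lemma prod_regroup:
  fixes h :: "nat \<Rightarrow> real" and f :: "nat \<Rightarrow> nat"
  assumes "f ` {..<n} \<subseteq> {..<p}"
  shows "(\<Prod>l<n. h (f l)) = (\<Prod>j<p. h j ^ card {l. l < n \<and> f l = j})"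
proof -
  have "(\<Prod>l<n. h (f l)) = (\<Prod>j<p. \<Prod>l\<in>{l. l \<in> {..<n} \<and> f l = j}. h (f l))"
    using assms by (intro prod.group[symmetric]) auto
  also have "\<dots> = (\<Prod>j<p. \<Prod>l\<in>{l. l \<in> {..<n} \<and> f l = j}. h j)"
    by (intro prod.cong refl) auto
  finally show ?thesis by simp
qed

lemma card_image_from_counts:
  fixes f :: "nat \<Rightarrow> nat"
  assumes "\<And>j. card {l. l < n \<and> f l = j} \<noteq> 1"
  shows "2 * card (f ` {..<n}) \<le> n"
proof -
  have "n = (\<Sum>j\<in>f ` {..<n}. card {l. l \<in> {..<n} \<and> f l = j})"
    using sum.group[of "{..<n}" "f ` {..<n}" f "\<lambda>_. 1::nat"] by simp
  also have "\<dots> \<ge> (\<Sum>j\<in>f ` {..<n}. 2)"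
  proof (intro sum_mono)
    fix j assume "j \<in> f ` {..<n}"
    then obtain l where l: "l < n" "f l = j" by auto
    hence "card {l. l \<in> {..<n} \<and> f l = j} \<noteq> 0" by (auto simp: card_eq_0_iff)
    moreover have "card {l. l \<in> {..<n} \<and> f l = j} \<noteq> 1" using assms[of j] by simp
    ultimately show "2 \<le> card {l. l \<in> {..<n} \<and> f l = j}" by linarith
  qed
  finally show ?thesis by (simp add: mult.commute)
qed

lemma mz_bound:
  fixes M :: "'a measure" and Y :: "'a \<Rightarrow> real" and p k :: nat
  assumes M: "prob_space M" and p: "0 < p"
    and int: "\<And>n. n \<le> 2*k \<Longrightarrow> integrable M (\<lambda>x. Y x ^ n)"
    and mean: "(\<integral>x. Y x \<partial>M) = 0"
    and mom: "\<And>n. n \<le> 2*k \<Longrightarrow> \<bar>\<integral>x. Y x ^ n \<partial>M\<bar> \<le> Mb" and Mb: "1 \<le> Mb"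
  shows "integrable (PiM {..<p} (\<lambda>_. M)) (\<lambda>X. (\<Sum>j<p. Y (X j)) ^ (2*k))
     \<and> (\<integral>X. (\<Sum>j<p. Y (X j)) ^ (2*k) \<partial>PiM {..<p} (\<lambda>_. M)) \<le> real (k^(2*k) * p^k) * Mb^k"
proof -
  interpret P: product_prob_space "\<lambda>_. M" "{..<p}"
    using M by (simp add: product_prob_space_def product_sigma_finite_def
        prob_space_imp_sigma_finite product_prob_space_axioms_def)
  define cnt where "cnt f j = card {l. l < 2*k \<and> f l = j}" for f :: "nat \<Rightarrow> nat" and j
  define Fs where "Fs = PiE {..<2*k} (\<lambda>_. {..<p})"
  have finFs: "finite Fs" unfolding Fs_def by (auto intro!: finite_PiE)
  have cnt_le: "cnt f j \<le> 2*k" for f j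
  proof -
    have "cnt f j \<le> card {..<2*k}" unfolding cnt_def by (rule card_mono) auto
    then show ?thesis by simp
  qed
  have expand: "(\<Sum>j<p. Y (X j)) ^ (2*k) = (\<Sum>f\<in>Fs. \<Prod>j<p. Y (X j) ^ cnt f j)" for X
  proof -
    have "(\<Sum>j<p. Y (X j)) ^ (2*k) = (\<Prod>l<2*k. \<Sum>j<p. Y (X j))" by simp
    also have "\<dots> = (\<Sum>f\<in>Fs. \<Prod>l<2*k. Y (X (f l)))"
      unfolding Fs_def by (rule prod_sum_PiE) auto
    also have "\<dots> = (\<Sum>f\<in>Fs. \<Prod>j<p. Y (X j) ^ cnt f j)"
    proof (intro sum.cong refl)
      fix f assume "f \<in> Fs"
      hence "f ` {..<2*k} \<subseteq> {..<p}" unfolding Fs_def by auto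
      then show "(\<Prod>l<2*k. Y (X (f l))) = (\<Prod>j<p. Y (X j) ^ cnt f j)"
        unfolding cnt_def by (rule prod_regroup)
    qed
    finally show ?thesis .
  qed
  have tint: "integrable (PiM {..<p} (\<lambda>_. M)) (\<lambda>X. \<Prod>j<p. Y (X j) ^ cnt f j)" for f
    by (rule P.product_integrable_prod) (auto intro: int cnt_le)
  have tval: "(\<integral>X. (\<Prod>j<p. Y (X j) ^ cnt f j) \<partial>PiM {..<p} (\<lambda>_. M)) = (\<Prod>j<p. \<integral>x. Y x ^ cnt f j \<partial>M)" for f
    by (rule P.product_integral_prod) (auto intro: int cnt_le)
  have tbound: "(\<Prod>j<p. \<integral>x. Y x ^ cnt f j \<partial>M) \<le> (if card (f ` {..<2*k}) \<le> k then Mb^k else 0)"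
    if fF: "f \<in> Fs" for f
  proof (cases "\<exists>j<p. cnt f j = 1")
    case True
    then obtain j where j: "j < p" "cnt f j = 1" by auto
    have z: "(\<Prod>j<p. \<integral>x. Y x ^ cnt f j \<partial>M) = 0"
      using j mean by (intro prod_zero bexI[of _ j]) auto
    show ?thesis unfolding z using Mb by simp
  next
    case False
    have img: "f ` {..<2*k} \<subseteq> {..<p}" using fF unfolding Fs_def by auto
    have nz: "cnt f j \<noteq> 1" for j
    proof (cases "j < p")
      case True then show ?thesis using False by auto
    next
      case False
      hence e: "{l. l < 2*k \<and> f l = j} = {}" using img by auto
      show ?thesis unfolding cnt_def e by simp
    qed
    have ck: "card (f ` {..<2*k}) \<le> k"
      using card_image_from_counts[of "2*k" f] nz unfolding cnt_def by simp
    have "(\<Prod>j<p. \<integral>x. Y x ^ cnt f j \<partial>M) \<le> \<bar>\<Prod>j<p. \<integral>x. Y x ^ cnt f j \<partial>M\<bar>" by simp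
    also have "\<dots> = (\<Prod>j<p. \<bar>\<integral>x. Y x ^ cnt f j \<partial>M\<bar>)" by (simp add: abs_prod)
    also have "\<dots> \<le> (\<Prod>j<p. if j \<in> f ` {..<2*k} then Mb else 1)"
    proof (intro prod_mono conjI)
      fix j assume "j \<in> {..<p}"
      show "0 \<le> \<bar>\<integral>x. Y x ^ cnt f j \<partial>M\<bar>" by simp
      show "\<bar>\<integral>x. Y x ^ cnt f j \<partial>M\<bar> \<le> (if j \<in> f ` {..<2*k} then Mb else 1)"
      proof (cases "j \<in> f ` {..<2*k}")
        case True then show ?thesis using mom[OF cnt_le] by simp
      next
        case False
        hence "cnt f j = 0" unfolding cnt_def by (auto simp: card_eq_0_iff)
        then show ?thesis using False M by (simp add: prob_space.prob_space)
      qed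
    qed
    also have "\<dots> = Mb ^ card ({..<p} \<inter> f ` {..<2*k})"
      by (simp add: prod.If_cases)
    also have "{..<p} \<inter> f ` {..<2*k} = f ` {..<2*k}" using img by auto
    also have "Mb ^ card (f ` {..<2*k}) \<le> Mb ^ k" using ck Mb by (intro power_increasing) auto
    finally show ?thesis using ck by simp
  qed
  have intS: "integrable (PiM {..<p} (\<lambda>_. M)) (\<lambda>X. (\<Sum>j<p. Y (X j)) ^ (2*k))"
    unfolding expand apply (rule Bochner_Integration.integrable_sum) by (rule tint)
  have "(\<integral>X. (\<Sum>j<p. Y (X j)) ^ (2*k) \<partial>PiM {..<p} (\<lambda>_. M))
      = (\<Sum>f\<in>Fs. \<integral>X. (\<Prod>j<p. Y (X j) ^ cnt f j) \<partial>PiM {..<p} (\<lambda>_. M))"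
    unfolding expand by (rule Bochner_Integration.integral_sum) (rule tint)
  also have "\<dots> \<le> (\<Sum>f\<in>Fs. if card (f ` {..<2*k}) \<le> k then Mb^k else 0)"
    by (intro sum_mono) (simp add: tval tbound)
  also have "\<dots> = real (card {f \<in> Fs. card (f ` {..<2*k}) \<le> k}) * Mb^k"
    using finFs by (simp add: sum.inter_filter[symmetric])
  also have "\<dots> \<le> real (k^(2*k) * p^k) * Mb^k"
    using card_small_image[OF p, of "2*k" k] Mb unfolding Fs_def
    by (intro mult_right_mono) (auto simp del: of_nat_mult of_nat_power)
  finally show ?thesis using intS by simp
qed



definition Kc :: "real \<Rightarrow> real \<Rightarrow> nat \<Rightarrow> real" where
  "Kc B \<sigma> n = 2 * fact n * exp ((real n ^ 2 * B ^ 2 + 1) * \<sigma> ^ 2)"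

lemma Kc_nonneg: "0 \<le> Kc B \<sigma> n" unfolding Kc_def by simp

lemma sg_meas:
  assumes "subgaussian_vec L \<mu> \<sigma>" "l < L"
  shows "(\<lambda>x. x l) \<in> borel_measurable \<mu>"
  using assms unfolding subgaussian_vec_def by (auto intro: borel_measurable_integrable)

lemma inner_meas:
  assumes "subgaussian_vec L \<mu> \<sigma>"
  shows "(\<lambda>x. inner_L L x \<theta>) \<in> borel_measurable \<mu>"
  unfolding inner_L_def
  by (intro borel_measurable_sum borel_measurable_times sg_meas[OF assms]) auto

lemma A_moment:
  assumes sg: "subgaussian_vec L \<mu> \<sigma>" and th: "norm_L L \<theta> \<le> B" and i: "i < L"
  shows "integrable \<mu> (\<lambda>x. \<bar>exp (inner_L L x \<theta>) * x i\<bar> ^ n)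
    \<and> (\<integral>x. \<bar>exp (inner_L L x \<theta>) * x i\<bar> ^ n \<partial>\<mu>) \<le> Kc B \<sigma> n"
proof -
  define vp where "vp = (\<lambda>l. real n * \<theta> l + (if l = i then 1 else 0))"
  define vm where "vm = (\<lambda>l. real n * \<theta> l - (if l = i then 1 else 0))"
  have dl: "(\<Sum>l<L. (if l = i then 1 else 0) * x l) = x i" for x :: "nat \<Rightarrow> real"
  proof -
    have "(\<Sum>l<L. (if l = i then 1 else 0) * x l) = (\<Sum>l<L. if l = i then x l else 0)"
      by (intro sum.cong) auto
    also have "\<dots> = x i" using i by (subst sum.delta) auto
    finally show ?thesis .
  qed
  have ip: "inner_L L vp x = real n * inner_L L x \<theta> + x i" for x
  proof -
    have "inner_L L vp x = (\<Sum>l<L. real n * (x l * \<theta> l) + (if l = i then 1 else 0) * x l)"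
      unfolding inner_L_def vp_def by (intro sum.cong) (auto simp: algebra_simps)
    also have "\<dots> = real n * inner_L L x \<theta> + x i"
      unfolding inner_L_def by (simp add: sum.distrib sum_distrib_left dl)
    finally show ?thesis .
  qed
  have im: "inner_L L vm x = real n * inner_L L x \<theta> - x i" for x
  proof -
    have "inner_L L vm x = (\<Sum>l<L. real n * (x l * \<theta> l) - (if l = i then 1 else 0) * x l)"
      unfolding inner_L_def vm_def by (intro sum.cong) (auto simp: algebra_simps)
    also have "\<dots> = real n * inner_L L x \<theta> - x i"
      unfolding inner_L_def by (simp add: sum_subtractf sum_distrib_left dl)
    finally show ?thesis .
  qed
  have B0: "0 \<le> B" using th unfolding norm_L_def by (meson order_trans real_sqrt_ge_zero sum_nonneg zero_le_power2)
  have th2: "(\<Sum>l<L. (\<theta> l)\<^sup>2) \<le> B ^ 2"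
  proof -
    have "sqrt (\<Sum>l<L. (\<theta> l)\<^sup>2) \<le> B" using th unfolding norm_L_def .
    moreover have "0 \<le> (\<Sum>l<L. (\<theta> l)\<^sup>2)" by (intro sum_nonneg) auto
    ultimately have "(sqrt (\<Sum>l<L. (\<theta> l)\<^sup>2))^2 \<le> B^2" by (intro power_mono) auto
    moreover have "0 \<le> (\<Sum>l<L. (\<theta> l)\<^sup>2)" by (intro sum_nonneg) auto
    ultimately show ?thesis by simp
  qed
  have nv: "(norm_L L v)\<^sup>2 \<le> 2 * real n ^ 2 * B ^ 2 + 2"
    if v: "\<And>l. \<bar>v l\<bar> \<le> real n * \<bar>\<theta> l\<bar> + (if l = i then 1 else 0)" for v
  proof -
    have "(norm_L L v)\<^sup>2 = (\<Sum>l<L. (v l)\<^sup>2)" unfolding norm_L_def by (simp add: sum_nonneg)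
    also have "\<dots> \<le> (\<Sum>l<L. 2 * real n ^ 2 * (\<theta> l)\<^sup>2 + 2 * (if l = i then 1 else 0))"
    proof (intro sum_mono)
      fix l
      have "(v l)\<^sup>2 = \<bar>v l\<bar>^2" by simp
      also have "\<dots> \<le> (real n * \<bar>\<theta> l\<bar> + (if l = i then 1 else 0))^2"
        by (intro power_mono v) auto
      also have "\<dots> \<le> 2 * real n ^ 2 * (\<theta> l)\<^sup>2 + 2 * (if l = i then 1 else 0)"
      proof -
        have "(a + b)^2 \<le> 2*a^2 + 2*b^2" for a b :: real
        proof -
          have "0 \<le> (a - b)^2" by simp
          then show ?thesis by (simp add: power2_eq_square algebra_simps)
        qed
        from this[of "real n * \<bar>\<theta> l\<bar>" "(if l = i then 1 else 0)"]
        show ?thesis by (cases "l = i") (simp_all add: power_mult_distrib)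
      qed
      finally show "(v l)\<^sup>2 \<le> 2 * real n ^ 2 * (\<theta> l)\<^sup>2 + 2 * (if l = i then 1 else 0)" .
    qed
    also have "\<dots> = 2 * real n ^ 2 * (\<Sum>l<L. (\<theta> l)\<^sup>2) + 2"
    proof -
      have "(\<Sum>l<L. 2 * (if l = i then 1 else 0::real)) = (\<Sum>l<L. if l = i then 2 else 0)"
        by (intro sum.cong) auto
      also have "\<dots> = 2" using i by (subst sum.delta) auto
      finally show ?thesis by (simp add: sum.distrib sum_distrib_left)
    qed
    also have "\<dots> \<le> 2 * real n ^ 2 * B ^ 2 + 2"
      using th2 by (intro add_right_mono mult_left_mono) auto
    finally show ?thesis .
  qed
  have mgf: "integrable \<mu> (\<lambda>x. exp (inner_L L v x)) \<and> (\<integral>x. exp (inner_L L v x) \<partial>\<mu>) \<le> exp ((real n ^ 2 * B ^ 2 + 1) * \<sigma> ^ 2)"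
    if v: "\<And>l. \<bar>v l\<bar> \<le> real n * \<bar>\<theta> l\<bar> + (if l = i then 1 else 0)" for v
  proof -
    have a: "integrable \<mu> (\<lambda>x. exp (inner_L L v x))" "(\<integral>x. exp (inner_L L v x) \<partial>\<mu>) \<le> exp ((norm_L L v)\<^sup>2 * \<sigma>\<^sup>2 / 2)"
      using sg unfolding subgaussian_vec_def by auto
    have "(norm_L L v)\<^sup>2 * \<sigma>\<^sup>2 / 2 \<le> (2 * real n ^ 2 * B ^ 2 + 2) * \<sigma>\<^sup>2 / 2"
      using nv[OF v] by (intro divide_right_mono mult_right_mono) auto
    also have "\<dots> = (real n ^ 2 * B ^ 2 + 1) * \<sigma> ^ 2" by (simp add: field_simps)
    finally show ?thesis using a by (meson exp_le_cancel_iff order_trans)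
  qed
  have vpb: "\<bar>vp l\<bar> \<le> real n * \<bar>\<theta> l\<bar> + (if l = i then 1 else 0)" for l
    unfolding vp_def by (auto simp: abs_mult intro: order_trans[OF abs_triangle_ineq])
  have vmb: "\<bar>vm l\<bar> \<le> real n * \<bar>\<theta> l\<bar> + (if l = i then 1 else 0)" for l
    unfolding vm_def by (auto simp: abs_mult intro: order_trans[OF abs_triangle_ineq4])
  note mp = mgf[OF vpb] and mm = mgf[OF vmb]
  have bound: "\<bar>exp (inner_L L x \<theta>) * x i\<bar> ^ n \<le> fact n * (exp (inner_L L vp x) + exp (inner_L L vm x))" for x
  proof -
    have "\<bar>exp (inner_L L x \<theta>) * x i\<bar> ^ n = exp (inner_L L x \<theta>) ^ n * \<bar>x i\<bar> ^ n"
      by (simp add: abs_mult power_mult_distrib)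
    also have "\<dots> \<le> exp (inner_L L x \<theta>) ^ n * (fact n * (exp (x i) + exp (- x i)))"
      by (intro mult_left_mono abs_pow_le_exp) auto
    also have "\<dots> = fact n * (exp (real n * inner_L L x \<theta>) * exp (x i) + exp (real n * inner_L L x \<theta>) * exp (- x i))"
      by (simp add: exp_of_nat_mult algebra_simps)
    also have "\<dots> = fact n * (exp (inner_L L vp x) + exp (inner_L L vm x))"
      by (simp add: ip im exp_add exp_diff exp_minus field_simps)
    finally show ?thesis .
  qed
  have meas: "(\<lambda>x. \<bar>exp (inner_L L x \<theta>) * x i\<bar> ^ n) \<in> borel_measurable \<mu>"
    using inner_meas[OF sg] sg_meas[OF sg i] by measurable
  have intd: "integrable \<mu> (\<lambda>x. fact n * (exp (inner_L L vp x) + exp (inner_L L vm x)))"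
    using mp mm by auto
  have int: "integrable \<mu> (\<lambda>x. \<bar>exp (inner_L L x \<theta>) * x i\<bar> ^ n)"
  proof (rule Bochner_Integration.integrable_bound[OF intd meas], intro AE_I2)
    fix x
    have "0 \<le> fact n * (exp (inner_L L vp x) + exp (inner_L L vm x))" by simp
    then show "norm (\<bar>exp (inner_L L x \<theta>) * x i\<bar> ^ n) \<le> norm (fact n * (exp (inner_L L vp x) + exp (inner_L L vm x)))"
      using bound[of x] by simp
  qed
  have "(\<integral>x. \<bar>exp (inner_L L x \<theta>) * x i\<bar> ^ n \<partial>\<mu>) \<le> (\<integral>x. fact n * (exp (inner_L L vp x) + exp (inner_L L vm x)) \<partial>\<mu>)"
    by (intro integral_mono int intd bound)
  also have "\<dots> = fact n * ((\<integral>x. exp (inner_L L vp x) \<partial>\<mu>) + (\<integral>x. exp (inner_L L vm x) \<partial>\<mu>))"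
    using mp mm by simp
  also have "\<dots> \<le> fact n * (exp ((real n ^ 2 * B ^ 2 + 1) * \<sigma> ^ 2) + exp ((real n ^ 2 * B ^ 2 + 1) * \<sigma> ^ 2))"
    using mp mm by (intro mult_left_mono add_mono) auto
  also have "\<dots> = Kc B \<sigma> n" unfolding Kc_def by simp
  finally show ?thesis using int by simp
qed



definition Mbc :: "real \<Rightarrow> real \<Rightarrow> nat \<Rightarrow> real" where
  "Mbc B \<sigma> N = 1 + (\<Sum>n\<le>N. 2 ^ n * (Kc B \<sigma> n + Kc B \<sigma> 1 ^ n))"

lemma Mbc_ge1: "1 \<le> Mbc B \<sigma> N"
  unfolding Mbc_def by (intro add_increasing2 sum_nonneg mult_nonneg_nonneg add_nonneg_nonneg Kc_nonneg zero_le_power) auto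

lemma Y_moments:
  assumes prob: "prob_space \<mu>" and sg: "subgaussian_vec L \<mu> \<sigma>" and th: "norm_L L \<theta> \<le> B" and i: "i < L" and n: "n \<le> N"
  shows "integrable \<mu> (\<lambda>x. (exp (inner_L L x \<theta>) * x i - (\<integral>y. exp (inner_L L y \<theta>) * y i \<partial>\<mu>)) ^ n)
    \<and> \<bar>\<integral>x. (exp (inner_L L x \<theta>) * x i - (\<integral>y. exp (inner_L L y \<theta>) * y i \<partial>\<mu>)) ^ n \<partial>\<mu>\<bar> \<le> Mbc B \<sigma> N"
proof -
  interpret prob_space \<mu> by (rule prob)
  define A where "A = (\<lambda>x. exp (inner_L L x \<theta>) * x i)"
  define m where "m = (\<integral>y. A y \<partial>\<mu>)"
  have measA: "A \<in> borel_measurable \<mu>"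
    unfolding A_def using inner_meas[OF sg] sg_meas[OF sg i] by measurable
  note a1 = A_moment[OF sg th i, of 1] and an = A_moment[OF sg th i, of n]
  have intabsA: "integrable \<mu> (\<lambda>x. \<bar>A x\<bar>)" using a1 unfolding A_def by simp
  have intA: "integrable \<mu> A" using intabsA measA integrable_abs_iff by blast
  have mb: "\<bar>m\<bar> \<le> Kc B \<sigma> 1"
  proof -
    have "\<bar>m\<bar> \<le> (\<integral>x. \<bar>A x\<bar> \<partial>\<mu>)" unfolding m_def by (rule integral_abs_bound)
    also have "\<dots> \<le> Kc B \<sigma> 1" using a1 unfolding A_def by simp
    finally show ?thesis .
  qed
  define g where "g = (\<lambda>x. 2 ^ n * (\<bar>A x\<bar> ^ n + Kc B \<sigma> 1 ^ n))"
  have intg: "integrable \<mu> g" using an unfolding g_def A_def by auto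
  have gb: "\<bar>(A x - m) ^ n\<bar> \<le> g x" for x
  proof -
    have "\<bar>(A x - m) ^ n\<bar> = \<bar>A x - m\<bar> ^ n" by (simp add: power_abs)
    also have "\<dots> \<le> (\<bar>A x\<bar> + \<bar>m\<bar>) ^ n" by (intro power_mono) auto
    also have "\<dots> \<le> 2 ^ n * (\<bar>A x\<bar> ^ n + \<bar>m\<bar> ^ n)" by (rule sum_pow_le2) auto
    also have "\<dots> \<le> g x" unfolding g_def using mb
      by (intro mult_left_mono add_left_mono power_mono) auto
    finally show ?thesis .
  qed
  have measY: "(\<lambda>x. (A x - m) ^ n) \<in> borel_measurable \<mu>" using measA by measurable
  have intY: "integrable \<mu> (\<lambda>x. (A x - m) ^ n)"
  proof (rule Bochner_Integration.integrable_bound[OF intg measY], intro AE_I2)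
    fix x
    have "0 \<le> g x" using gb[of x] by linarith
    then show "norm ((A x - m) ^ n) \<le> norm (g x)" using gb[of x] by simp
  qed
  have "\<bar>\<integral>x. (A x - m) ^ n \<partial>\<mu>\<bar> \<le> (\<integral>x. \<bar>(A x - m) ^ n\<bar> \<partial>\<mu>)" by (rule integral_abs_bound)
  also have "\<dots> \<le> (\<integral>x. g x \<partial>\<mu>)" using intY intg gb by (intro integral_mono) auto
  also have "\<dots> = 2 ^ n * ((\<integral>x. \<bar>A x\<bar> ^ n \<partial>\<mu>) + Kc B \<sigma> 1 ^ n)"
    using an unfolding g_def A_def by (simp add: prob_space)
  also have "\<dots> \<le> 2 ^ n * (Kc B \<sigma> n + Kc B \<sigma> 1 ^ n)"
    using an unfolding A_def by (intro mult_left_mono add_right_mono) auto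
  also have "\<dots> \<le> (\<Sum>n\<le>N. 2 ^ n * (Kc B \<sigma> n + Kc B \<sigma> 1 ^ n))"
    using n by (intro member_le_sum) (auto intro!: add_nonneg_nonneg Kc_nonneg mult_nonneg_nonneg zero_le_power)
  also have "\<dots> \<le> Mbc B \<sigma> N" unfolding Mbc_def by simp
  finally show ?thesis using intY unfolding A_def m_def by simp
qed



lemma core:
  fixes \<mu> :: "(nat \<Rightarrow> real) measure"
  assumes prob: "prob_space \<mu>" and sg: "subgaussian_vec L \<mu> \<sigma>" and th: "norm_L L \<theta> \<le> B"
    and p: "0 < p" and k: "1 \<le> k" and t: "0 < t"
  shows "measure (rows_space p \<mu>) {X \<in> space (rows_space p \<mu>). norm_L L (\<lambda>i. II L p \<theta> X i - EII L p \<theta> \<mu> i) \<le> t}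
    \<ge> 1 - real L ^ k * (real (k^(2*k) * p^k) * Mbc B \<sigma> (2*k) ^ k) / t ^ (2*k)"
proof -
  let ?P = "PiM {..<p} (\<lambda>_. \<mu>)"
  interpret P: product_prob_space "\<lambda>_. \<mu>" "{..<p}"
    using prob by (simp add: product_prob_space_def product_sigma_finite_def
        prob_space_imp_sigma_finite product_prob_space_axioms_def)
  define A where "A i x = exp (inner_L L x \<theta>) * x i" for i x
  define m where "m i = (\<integral>y. A i y \<partial>\<mu>)" for i
  define Y where "Y i x = A i x - m i" for i x
  define S where "S i X = (\<Sum>j<p. Y i (X j))" for i X
  define Mb where "Mb = Mbc B \<sigma> (2*k)"
  have Mb1: "1 \<le> Mb" unfolding Mb_def by (rule Mbc_ge1)
  have measA: "A i \<in> borel_measurable \<mu>" if "i < L" for i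
    unfolding A_def using inner_meas[OF sg] sg_meas[OF sg that] by measurable
  have measY: "Y i \<in> borel_measurable \<mu>" if "i < L" for i
    unfolding Y_def using measA[OF that] by measurable
  have comp: "(\<lambda>X. X j) \<in> measurable ?P \<mu>" if "j < p" for j
    using that by (intro measurable_component_singleton) auto
  have distr: "distr ?P \<mu> (\<lambda>X. X j) = \<mu>" if "j < p" for j
    using that by (intro P.PiM_component) auto
  have intA: "integrable \<mu> (A i)" if "i < L" for i
  proof -
    have "integrable \<mu> (\<lambda>x. \<bar>A i x\<bar>)" using A_moment[OF sg th that, of 1] unfolding A_def by simp
    then show ?thesis using measA[OF that] integrable_abs_iff by blast
  qed
  have intAP: "integrable ?P (\<lambda>X. A i (X j))" and intgAP: "(\<integral>X. A i (X j) \<partial>?P) = m i"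
    if "i < L" "j < p" for i j
  proof -
    have "integrable (distr ?P \<mu> (\<lambda>X. X j)) (A i)" using distr[OF that(2)] intA[OF that(1)] by simp
    then show "integrable ?P (\<lambda>X. A i (X j))"
      using integrable_distr_eq[OF comp[OF that(2)] measA[OF that(1)]] by simp
    have "(\<integral>X. A i (X j) \<partial>?P) = (\<integral>x. A i x \<partial>distr ?P \<mu> (\<lambda>X. X j))"
      by (rule integral_distr[symmetric, OF comp[OF that(2)] measA[OF that(1)]])
    then show "(\<integral>X. A i (X j) \<partial>?P) = m i" using distr[OF that(2)] unfolding m_def by simp
  qed
  have ident: "II L p \<theta> X i - EII L p \<theta> \<mu> i = S i X" if "i < L" for i X
  proof -
    have "EII L p \<theta> \<mu> i = (\<integral>X. (\<Sum>j<p. A i (X j)) \<partial>?P)"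
      unfolding EII_def II_def A_def rows_space_def by simp
    also have "\<dots> = (\<Sum>j<p. \<integral>X. A i (X j) \<partial>?P)"
      by (rule Bochner_Integration.integral_sum) (use intAP[OF that] in auto)
    also have "\<dots> = (\<Sum>j<p. m i)" using intgAP[OF that] by simp
    finally show ?thesis unfolding S_def Y_def II_def A_def by (simp add: sum_subtractf)
  qed
  have mz: "integrable ?P (\<lambda>X. S i X ^ (2*k)) \<and> (\<integral>X. S i X ^ (2*k) \<partial>?P) \<le> real (k^(2*k) * p^k) * Mb^k"
    if i: "i < L" for i
  proof -
    have ym: "integrable \<mu> (\<lambda>x. Y i x ^ n) \<and> \<bar>\<integral>x. Y i x ^ n \<partial>\<mu>\<bar> \<le> Mb" if "n \<le> 2*k" for n
      using Y_moments[OF prob sg th i that] unfolding Y_def m_def A_def Mb_def by simp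
    have mean: "(\<integral>x. Y i x \<partial>\<mu>) = 0"
      unfolding Y_def m_def using intA[OF i] prob by (simp add: prob_space.prob_space)
    show ?thesis unfolding S_def
      by (rule mz_bound[OF prob p _ mean _ Mb1]) (use ym in auto)
  qed
  define Q where "Q X = (\<Sum>i<L. (S i X)\<^sup>2) ^ k" for X
  have measS: "(\<lambda>X. S i X) \<in> borel_measurable ?P" if "i < L" for i
    unfolding S_def
    by (intro borel_measurable_sum measurable_compose[OF comp measY[OF that]]) auto
  have measQ: "Q \<in> borel_measurable ?P"
    unfolding Q_def by (intro borel_measurable_power borel_measurable_sum borel_measurable_power measS) auto
  have Qb: "Q X \<le> real L ^ (k - 1) * (\<Sum>i<L. S i X ^ (2*k))" for X
  proof -
    have "Q X \<le> real (card {..<L}) ^ (k - 1) * (\<Sum>i<L. ((S i X)\<^sup>2) ^ k)"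
      unfolding Q_def by (rule power_sum_jensen) (use k in auto)
    then show ?thesis by (simp add: power_mult)
  qed
  have intR: "integrable ?P (\<lambda>X. real L ^ (k - 1) * (\<Sum>i<L. S i X ^ (2*k)))"
    using mz by auto
  have Qnn: "0 \<le> Q X" for X unfolding Q_def by (simp add: sum_nonneg)
  have intQ: "integrable ?P Q"
  proof (rule Bochner_Integration.integrable_bound[OF intR measQ], intro AE_I2)
    fix X
    have "0 \<le> real L ^ (k - 1) * (\<Sum>i<L. S i X ^ (2*k))" using Qnn[of X] Qb[of X] by linarith
    then show "norm (Q X) \<le> norm (real L ^ (k - 1) * (\<Sum>i<L. S i X ^ (2*k)))"
      using Qb[of X] Qnn[of X] by simp
  qed
  have EQ: "(\<integral>X. Q X \<partial>?P) \<le> real L ^ k * (real (k^(2*k) * p^k) * Mb^k)"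
  proof -
    have "(\<integral>X. Q X \<partial>?P) \<le> (\<integral>X. real L ^ (k - 1) * (\<Sum>i<L. S i X ^ (2*k)) \<partial>?P)"
      by (intro integral_mono intQ intR Qb)
    also have "\<dots> = real L ^ (k - 1) * (\<Sum>i<L. \<integral>X. S i X ^ (2*k) \<partial>?P)"
      by (subst integral_mult_right_zero, subst Bochner_Integration.integral_sum) (use mz in auto)
    also have "\<dots> \<le> real L ^ (k - 1) * (\<Sum>i<L. real (k^(2*k) * p^k) * Mb^k)"
      by (intro mult_left_mono sum_mono) (use mz in auto)
    also have "\<dots> = real L ^ k * (real (k^(2*k) * p^k) * Mb^k)"
    proof (cases L)
      case 0 then show ?thesis using k by simp
    next
      case (Suc l) then show ?thesis using k by (cases k) (auto simp: algebra_simps)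
    qed
    finally show ?thesis .
  qed
  have tk: "0 < t ^ (2*k)" using t by simp
  have mark: "measure ?P {X \<in> space ?P. Q X \<ge> t ^ (2*k)} \<le> (\<integral>X. Q X \<partial>?P) / t ^ (2*k)"
    by (rule integral_Markov_inequality_measure[OF intQ _ _ tk]) (use Qnn in auto)
  have setq: "{X \<in> space (rows_space p \<mu>). norm_L L (\<lambda>i. II L p \<theta> X i - EII L p \<theta> \<mu> i) \<le> t}
      = {X \<in> space ?P. sqrt (\<Sum>i<L. (S i X)\<^sup>2) \<le> t}"
    unfolding rows_space_def norm_L_def using ident by simp
  have measG: "{X \<in> space ?P. sqrt (\<Sum>i<L. (S i X)\<^sup>2) \<le> t} \<in> sets ?P"
  proof -
    have h: "(\<lambda>X. (\<Sum>i<L. (S i X)\<^sup>2)) \<in> borel_measurable ?P"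
      by (intro borel_measurable_sum borel_measurable_power measS) auto
    have "(\<lambda>X. sqrt (\<Sum>i<L. (S i X)\<^sup>2)) \<in> borel_measurable ?P"
      using h by measurable
    then show ?thesis by measurable
  qed
  have measB: "{X \<in> space ?P. Q X \<ge> t ^ (2*k)} \<in> sets ?P" using measQ by measurable
  have sub: "space ?P - {X \<in> space ?P. Q X \<ge> t ^ (2*k)} \<subseteq> {X \<in> space ?P. sqrt (\<Sum>i<L. (S i X)\<^sup>2) \<le> t}"
  proof
    fix X assume X: "X \<in> space ?P - {X \<in> space ?P. Q X \<ge> t ^ (2*k)}"
    hence q: "Q X < t ^ (2*k)" by auto
    show "X \<in> {X \<in> space ?P. sqrt (\<Sum>i<L. (S i X)\<^sup>2) \<le> t}"
    proof (rule ccontr)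
      assume "X \<notin> {X \<in> space ?P. sqrt (\<Sum>i<L. (S i X)\<^sup>2) \<le> t}"
      hence "t < sqrt (\<Sum>i<L. (S i X)\<^sup>2)" using X by auto
      hence "t ^ 2 < (sqrt (\<Sum>i<L. (S i X)\<^sup>2)) ^ 2" using t by (intro power_strict_mono) auto
      hence "t ^ 2 < (\<Sum>i<L. (S i X)\<^sup>2)" by (simp add: sum_nonneg)
      hence "(t ^ 2) ^ k \<le> (\<Sum>i<L. (S i X)\<^sup>2) ^ k" using t by (intro power_mono) auto
      hence "t ^ (2*k) \<le> Q X" unfolding Q_def by (simp add: power_mult)
      then show False using q by simp
    qed
  qed
  have "1 - real L ^ k * (real (k^(2*k) * p^k) * Mb^k) / t ^ (2*k) \<le> 1 - (\<integral>X. Q X \<partial>?P) / t ^ (2*k)"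
    using EQ tk by (simp add: divide_right_mono)
  also have "\<dots> \<le> 1 - measure ?P {X \<in> space ?P. Q X \<ge> t ^ (2*k)}" using mark by simp
  also have "\<dots> = measure ?P (space ?P - {X \<in> space ?P. Q X \<ge> t ^ (2*k)})"
    using P.prob_compl[OF measB] by simp
  also have "\<dots> \<le> measure ?P {X \<in> space ?P. sqrt (\<Sum>i<L. (S i X)\<^sup>2) \<le> t}"
    by (intro P.finite_measure_mono sub measG)
  finally have fin: "1 - real L ^ k * (real (k^(2*k) * p^k) * Mb^k) / t ^ (2*k)
    \<le> measure ?P {X \<in> space ?P. sqrt (\<Sum>i<L. (S i X)\<^sup>2) \<le> t}" .
  show ?thesis unfolding setq using fin unfolding Mb_def rows_space_def .
qed



lemma arith_bound:
  fixes Lr pr \<sigma> \<delta> s Mb :: real and k :: nat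
  assumes L: "1 \<le> Lr" and p: "1 \<le> pr" and sg: "0 < \<sigma>" and d: "0 < \<delta>"
    and ks: "s \<le> real k * \<delta>" and A: "real k ^ (2*k) * Mb ^ k / \<sigma> ^ (2*k) \<le> pr" and Mb: "0 \<le> Mb"
  shows "Lr ^ k * (real k ^ (2*k) * pr ^ k * Mb ^ k) / (1 * \<sigma> * sqrt (Lr + ln pr) * pr powr (1/2 + \<delta>)) ^ (2*k)
     \<le> 4 * pr powr (1 - s)"
proof -
  have lnp: "0 \<le> ln pr" using p by simp
  define Ac where "Ac = real k ^ (2*k) * Mb ^ k / \<sigma> ^ (2*k)"
  have Ac0: "0 \<le> Ac" unfolding Ac_def using Mb sg by simp
  have t: "(1 * \<sigma> * sqrt (Lr + ln pr) * pr powr (1/2 + \<delta>)) ^ (2*k)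
      = \<sigma> ^ (2*k) * (Lr + ln pr) ^ k * pr powr (real k + 2 * \<delta> * real k)"
  proof -
    have "(1 * \<sigma> * sqrt (Lr + ln pr) * pr powr (1/2 + \<delta>)) ^ (2*k)
        = \<sigma> ^ (2*k) * (sqrt (Lr + ln pr) ^ 2) ^ k * (pr powr (1/2 + \<delta>)) ^ (2*k)"
      by (simp add: power_mult_distrib power_mult[symmetric] mult.commute)
    also have "sqrt (Lr + ln pr) ^ 2 = Lr + ln pr" using L lnp by simp
    also have "(pr powr (1/2 + \<delta>)) ^ (2*k) = pr powr ((1/2 + \<delta>) * real (2*k))"
      using p by (simp add: powr_realpow[symmetric] powr_powr)
    also have "(1/2 + \<delta>) * real (2*k) = real k + 2 * \<delta> * real k" by (simp add: algebra_simps)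
    finally show ?thesis .
  qed
  have pk: "pr ^ k = pr powr real k" using p by (simp add: powr_realpow)
  have Lq: "Lr ^ k \<le> (Lr + ln pr) ^ k" using L lnp by (intro power_mono) auto
  have Lpos: "0 < (Lr + ln pr) ^ k" using L lnp by simp
  have "Lr ^ k * (real k ^ (2*k) * pr ^ k * Mb ^ k) / (1 * \<sigma> * sqrt (Lr + ln pr) * pr powr (1/2 + \<delta>)) ^ (2*k)
      = (Lr ^ k / (Lr + ln pr) ^ k) * Ac * (pr powr real k / pr powr (real k + 2 * \<delta> * real k))"
    unfolding t Ac_def pk by (simp add: field_simps)
  also have "pr powr real k / pr powr (real k + 2 * \<delta> * real k) = pr powr (- (2 * \<delta> * real k))"
    using p by (simp add: powr_diff[symmetric])
  also have "Lr ^ k / (Lr + ln pr) ^ k \<le> 1" using Lq Lpos by simp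
  hence "(Lr ^ k / (Lr + ln pr) ^ k) * Ac * pr powr (- (2 * \<delta> * real k)) \<le> 1 * Ac * pr powr (- (2 * \<delta> * real k))"
    using Ac0 by (intro mult_right_mono) auto
  also have "\<dots> \<le> pr * pr powr (- s)"
  proof -
    have "pr powr (- (2 * \<delta> * real k)) \<le> pr powr (- s)"
    proof -
      have "0 \<le> real k * \<delta>" using d by simp
      moreover have "2 * \<delta> * real k = 2 * (real k * \<delta>)" by simp
      ultimately have "s \<le> 2 * \<delta> * real k" using ks by linarith
      then show ?thesis using p by (intro powr_mono) auto
    qed
    moreover have "Ac \<le> pr" using A unfolding Ac_def .
    ultimately show ?thesis using Ac0 by (simp add: mult_mono)
  qed
  also have "\<dots> = pr powr (1 - s)" using p by (simp add: powr_diff powr_minus divide_inverse)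
  also have "\<dots> \<le> 4 * pr powr (1 - s)" by simp
  finally show ?thesis .
qed



theorem lemma13:
  shows "\<exists>C>0. \<forall>(B::real) (\<delta>::real) (s::real) (\<sigma>::real).
     \<delta> > 0 \<and> s \<ge> 2 \<and> \<sigma> > 0 \<longrightarrow>
     (\<exists>p0::nat. \<forall>p\<ge>p0. \<forall>(L::nat) (\<mu>::(nat \<Rightarrow> real) measure) (\<theta>::nat \<Rightarrow> real).
        prob_space \<mu> \<and> sets \<mu> = sets (PiM {..<L} (\<lambda>_. borel)) \<and>
        subgaussian_vec L \<mu> \<sigma> \<and> norm_L L \<theta> \<le> B \<longrightarrow>
        measure (rows_space p \<mu>)
          {X \<in> space (rows_space p \<mu>).
             norm_L L (\<lambda>i. II L p \<theta> X i - EII L p \<theta> \<mu> i)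
               \<le> C * \<sigma> * sqrt (real L + ln (real p)) * real p powr (1/2 + \<delta>)}
        \<ge> 1 - 4 * real p powr (1 - s))"
proof (intro exI[of _ "1::real"] conjI allI impI)
  fix B \<delta> s \<sigma> :: real
  assume a: "\<delta> > 0 \<and> s \<ge> 2 \<and> \<sigma> > 0"
  hence d: "0 < \<delta>" and s: "2 \<le> s" and sg: "0 < \<sigma>" by auto
  define k where "k = nat \<lceil>s / \<delta>\<rceil>"
  have sd: "0 < s / \<delta>" using d s by simp
  have kge: "s / \<delta> \<le> real k" unfolding k_def by linarith
  have k1: "1 \<le> k" unfolding k_def using sd by linarith
  have ks: "s \<le> real k * \<delta>" using kge d by (simp add: divide_le_eq)
  define Mb where "Mb = Mbc B \<sigma> (2*k)"
  have Mb0: "0 \<le> Mb" unfolding Mb_def using Mbc_ge1[of B \<sigma> "2*k"] by linarith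
  define Ac where "Ac = real k ^ (2*k) * Mb ^ k / \<sigma> ^ (2*k)"
  show "\<exists>p0::nat. \<forall>p\<ge>p0. \<forall>(L::nat) (\<mu>::(nat \<Rightarrow> real) measure) (\<theta>::nat \<Rightarrow> real).
        prob_space \<mu> \<and> sets \<mu> = sets (PiM {..<L} (\<lambda>_. borel)) \<and>
        subgaussian_vec L \<mu> \<sigma> \<and> norm_L L \<theta> \<le> B \<longrightarrow>
        measure (rows_space p \<mu>)
          {X \<in> space (rows_space p \<mu>).
             norm_L L (\<lambda>i. II L p \<theta> X i - EII L p \<theta> \<mu> i)
               \<le> 1 * \<sigma> * sqrt (real L + ln (real p)) * real p powr (1/2 + \<delta>)}
        \<ge> 1 - 4 * real p powr (1 - s)"
  proof (intro exI[of _ "nat \<lceil>Ac\<rceil> + 1"] allI impI)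
    fix p L :: nat and \<mu> :: "(nat \<Rightarrow> real) measure" and \<theta> :: "nat \<Rightarrow> real"
    assume pp: "nat \<lceil>Ac\<rceil> + 1 \<le> p"
    assume h: "prob_space \<mu> \<and> sets \<mu> = sets (PiM {..<L} (\<lambda>_. borel)) \<and>
        subgaussian_vec L \<mu> \<sigma> \<and> norm_L L \<theta> \<le> B"
    hence prob: "prob_space \<mu>" and sgv: "subgaussian_vec L \<mu> \<sigma>" and th: "norm_L L \<theta> \<le> B" by auto
    have p0: "0 < p" using pp by simp
    have p1: "1 \<le> real p" using pp by simp
    have pA: "Ac \<le> real p" using pp by linarith
    have lnp: "0 \<le> ln (real p)" using p1 by simp
    define t where "t = 1 * \<sigma> * sqrt (real L + ln (real p)) * real p powr (1/2 + \<delta>)"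
    interpret R: prob_space "rows_space p \<mu>"
      unfolding rows_space_def using prob by (intro prob_space_PiM) auto
    have pw: "0 \<le> 4 * real p powr (1 - s)" by simp
    show "measure (rows_space p \<mu>)
          {X \<in> space (rows_space p \<mu>).
             norm_L L (\<lambda>i. II L p \<theta> X i - EII L p \<theta> \<mu> i)
               \<le> 1 * \<sigma> * sqrt (real L + ln (real p)) * real p powr (1/2 + \<delta>)}
        \<ge> 1 - 4 * real p powr (1 - s)"
    proof (cases "L = 0")
      case True
      have t0: "0 \<le> t" unfolding t_def using sg lnp True by simp
      have "{X \<in> space (rows_space p \<mu>). norm_L L (\<lambda>i. II L p \<theta> X i - EII L p \<theta> \<mu> i) \<le> t}
          = space (rows_space p \<mu>)" using True t0 unfolding norm_L_def by auto
      then show ?thesis using pw R.prob_space unfolding t_def by simp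
    next
      case False
      hence L1: "1 \<le> real L" by simp
      have "0 < real L + ln (real p)" using L1 lnp by linarith
      hence "0 < sqrt (real L + ln (real p))" by simp
      moreover have "0 < real p powr (1/2 + \<delta>)" using p1 by simp
      ultimately have tpos: "0 < t" unfolding t_def using sg by simp
      have c: "measure (rows_space p \<mu>) {X \<in> space (rows_space p \<mu>). norm_L L (\<lambda>i. II L p \<theta> X i - EII L p \<theta> \<mu> i) \<le> t}
          \<ge> 1 - real L ^ k * (real (k^(2*k) * p^k) * Mbc B \<sigma> (2*k) ^ k) / t ^ (2*k)"
        by (rule core[OF prob sgv th p0 k1 tpos])
      have "real L ^ k * (real (k^(2*k) * p^k) * Mbc B \<sigma> (2*k) ^ k) / t ^ (2*k) \<le> 4 * real p powr (1 - s)"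
        using arith_bound[OF L1 p1 sg d ks _ Mb0] pA unfolding Ac_def t_def Mb_def by simp
      then show ?thesis using c unfolding t_def by linarith
    qed
  qed
qed simp

end
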